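(* Let $\nu$ be a distribution on $[0,1]$ with density bounded by some constant $M>0$, and let $T_0\in\mathbb N$. Then for every time horizon $T\ge T_0$ the regret of the Explore-then-Commit algorithm with exploration time $T_0$ satisfies \[R_T\le T_0-\frac12+M(T-T_0)\Big(\frac2{T_0^2}+\frac1{T_0}\Big).\] Moreover, for every $T\in\mathbb N$, choosing $T_0:=\lceil\sqrt{MT}\rceil$ yields \[R_T\le 2.5+2\sqrt{MT}.\]
   Context: Brokerage setting: for $p,v_1,v_2\in[0,1]$ let $\mathrm{gft}(p,v_1,v_2):=(v_1\vee v_2-v_1\wedge v_2)\,\mathbb I\{v_1\wedge v_2\le p\le v_1\vee v_2\}$ ($\vee,\wedge$ = max, min). Valuations $V_1,V_2,\dots$ are i.i.d. with law $\nu$; at round $t$ the learner posts $P_t\in[0,1]$ and obtains $\mathrm{GFT}_t(P_t)$ with $\mathrm{GFT}_t(q):=\mathrm{gft}(q,V_{2t-1},V_{2t})$; in the two-bit feedback model only $\mathbb I\{P_t\le V_{2t-1}\}$ and $\mathbb I\{P_t\le V_{2t}\}$ are revealed after round $t$. Regret: $R_T:=\sup_{p\in[0,1]}\mathbb E[\sum_{t=1}^T\mathrm{GFT}_t(p)]-\mathbb E[\sum_{t=1}^T\mathrm{GFT}_t(P_t)]$. The Explore-then-Commit (ETC) algorithm with parameter $T_0$ posts $P_t:=t/T_0$ for $t=1,\dots,T_0$, and for all $t\ge T_0+1$ posts $P_t:=\frac1{2T_0}\sum_{s=1}^{T_0}\big(\mathbb I\{P_s\le V_{2s-1}\}+\mathbb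 I\{P_s\le V_{2s}\}\big)$. "Density bounded by $M$" means absolutely continuous w.r.t. Lebesgue measure with density $f\le M$. *)

theory Defs
  imports "HOL-Probability.Probability"
begin

definition gft :: "real \<Rightarrow> real \<Rightarrow> real \<Rightarrow> real" where
  "gft p v1 v2 = (max v1 v2 - min v1 v2) *
     (if min v1 v2 \<le> p \<and> p \<le> max v1 v2 then 1 else 0)"

text \<open>GFT_t(q) = gft(q, V_{2t-1}, V_{2t}) (rounds t start at 1).\<close>
definition GFT :: "(nat \<Rightarrow> 'a \<Rightarrow> real) \<Rightarrow> nat \<Rightarrow> real \<Rightarrow> 'a \<Rightarrow> real" where
  "GFT V t q \<omega> = gft q (V (2 * t - 1) \<omega>) (V (2 * t) \<omega>)"

definition regret :: "'a measure \<Rightarrow> (nat \<Rightarrow> 'a \<Rightarrow> real) \<Rightarrow> (nat \<Rightarrow> 'a \<Rightarrow> real) \<Rightarrow> nat \<Rightarrow> real" where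
  "regret \<Omega> V P T =
     (SUP p\<in>{0..1}. integral\<^sup>L \<Omega> (\<lambda>\<omega>. \<Sum>t=1..T. GFT V t p \<omega>))
     - integral\<^sup>L \<Omega> (\<lambda>\<omega>. \<Sum>t=1..T. GFT V t (P t \<omega>) \<omega>)"

text \<open>Explore-then-Commit with exploration time T0: posts t/T0 for t \<le> T0, then the
  empirical average of the two-bit feedback collected during exploration.\<close>
definition etc_price :: "nat \<Rightarrow> (nat \<Rightarrow> 'a \<Rightarrow> real) \<Rightarrow> nat \<Rightarrow> 'a \<Rightarrow> real" where
  "etc_price T0 V t \<omega> =
     (if t \<le> T0 then real t / real T0
      else (1 / (2 * real T0)) *
        (\<Sum>s=1..T0. ((if real s / real T0 \<le> V (2 * s - 1) \<omega> then 1 else 0)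
                    + (if real s / real T0 \<le> V (2 * s) \<omega> then 1 else 0))))"

end

theory Submission
  imports Defs
begin

lemma count_sum:
  fixes x :: real assumes "0 \<le> x"
  shows "(\<Sum>s=1..N. if real s \<le> x then 1 else 0 :: real) = real (min N (nat \<lfloor>x\<rfloor>))"
proof (induction N)
  case 0 then show ?case by simp
next
  case (Suc N)
  have iff: "real (Suc N) \<le> x \<longleftrightarrow> Suc N \<le> nat \<lfloor>x\<rfloor>"
    using assms by (metis le_nat_floor nat_le_real_less of_nat_floor of_nat_le_iff order.trans less_eq_real_def)
  show ?case using Suc iff by (cases "real (Suc N) \<le> x") (auto simp: min_def)
qed

lemma count_bounds:
  fixes v :: real assumes n: "n \<ge> 1" and v: "0 \<le> v" "v \<le> 1"
  shows "v - 1 / real n \<le> (1 / real n) * (\<Sum>s=1..n. if real s / real n \<le> v then 1 else 0)"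
    and "(1 / real n) * (\<Sum>s=1..n. if real s / real n \<le> v then 1 else 0) \<le> v"
proof -
  have np: "real n > 0" using n by simp
  have "(\<Sum>s=1..n. if real s / real n \<le> v then 1 else 0 :: real) = (\<Sum>s=1..n. if real s \<le> real n * v then 1 else 0)"
    using np by (intro sum.cong) (auto simp: divide_le_eq mult.commute)
  also have "\<dots> = real (min n (nat \<lfloor>real n * v\<rfloor>))" using v np by (intro count_sum) simp
  also have "min n (nat \<lfloor>real n * v\<rfloor>) = nat \<lfloor>real n * v\<rfloor>"
  proof -
    have "real n * v \<le> real n" using v np by (simp add: mult_left_le)
    then have "\<lfloor>real n * v\<rfloor> \<le> int n" by (metis floor_mono floor_of_nat)
    then show ?thesis by simp
  qed
  also have "real (nat \<lfloor>real n * v\<rfloor>) = real_of_int \<lfloor>real n * v\<rfloor>" using v np by simp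
  finally have S: "(\<Sum>s=1..n. if real s / real n \<le> v then 1 else 0 :: real) = real_of_int \<lfloor>real n * v\<rfloor>" .
  define fl where "fl = real_of_int \<lfloor>real n * v\<rfloor>"
  have a: "real n * v - 1 \<le> fl" "fl \<le> real n * v" unfolding fl_def by linarith+
  have "v - 1 / real n = (real n * v - 1) / real n" using np by (simp add: field_simps)
  also have "\<dots> \<le> fl / real n" using a np by (intro divide_right_mono) auto
  finally show "v - 1 / real n \<le> (1 / real n) * (\<Sum>s=1..n. if real s / real n \<le> v then 1 else 0)"
    unfolding S fl_def by simp
  have "fl / real n \<le> (real n * v) / real n" using a np by (intro divide_right_mono) auto
  also have "\<dots> = v" using np by simp
  finally show "(1 / real n) * (\<Sum>s=1..n. if real s / real n \<le> v then 1 else 0) \<le> v"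
    unfolding S fl_def by simp
qed

lemma reindex2: fixes g :: "nat \<Rightarrow> real" shows "(\<Sum>s=1..n. g (2 * s - 1) + g (2 * s)) = (\<Sum>i=1..2 * n. g i)"
proof (induction n)
  case 0 then show ?case by simp
next
  case (Suc n)
  have "(\<Sum>i=1..2*Suc n. g i) = (\<Sum>i=1..2*n. g i) + g (2*n+1) + g (2*n+2)"
    by (simp add: sum.cl_ivl_Suc)
  then show ?case using Suc by (simp add: sum.cl_ivl_Suc)
qed


locale etc =
  fixes \<Omega> :: "'a measure" and V :: "nat \<Rightarrow> 'a \<Rightarrow> real"
    and \<nu> :: "real measure" and f :: "real \<Rightarrow> real" and Mb :: real
  assumes PS: "prob_space \<Omega>"
    and Vmeas: "\<And>i. i \<ge> 1 \<Longrightarrow> V i \<in> borel_measurable \<Omega>"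
    and ind: "prob_space.indep_vars \<Omega> (\<lambda>_. borel) V {1..}"
    and dist: "\<And>i. i \<ge> 1 \<Longrightarrow> distr \<Omega> borel (V i) = \<nu>"
    and fmeas: "f \<in> borel_measurable borel"
    and nudef: "\<nu> = density lborel (\<lambda>x. ennreal (f x))"
    and nu01: "emeasure \<nu> {0..1} = 1"
    and Mpos: "Mb > 0"
    and fb: "\<And>x. 0 \<le> f x \<and> f x \<le> Mb"
begin

sublocale prob_space \<Omega> by (rule PS)

lemma nu_prob: "prob_space \<nu>"
  using dist[of 1] prob_space_distr[OF Vmeas[of 1]] by simp

lemma space_nu[simp]: "space \<nu> = UNIV" and sets_nu[simp]: "sets \<nu> = sets borel"
  by (simp_all add: nudef)

lemma AE_nu01: "AE v in \<nu>. 0 \<le> v \<and> v \<le> 1"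
proof -
  interpret N: prob_space \<nu> by (rule nu_prob)
  have "emeasure \<nu> (UNIV - {0..1}) = emeasure \<nu> UNIV - emeasure \<nu> {0..1}"
    by (rule emeasure_Diff) auto
  also have "\<dots> = 0" using N.emeasure_space_1 nu01 by simp
  finally have "UNIV - {0..1} \<in> null_sets \<nu>" by (auto simp: null_sets_def)
  then show ?thesis by (rule AE_I') auto
qed

lemma integrable_nu:
  fixes g :: "real \<Rightarrow> real"
  assumes g: "g \<in> borel_measurable borel" and b: "\<And>v. 0 \<le> v \<Longrightarrow> v \<le> 1 \<Longrightarrow> \<bar>g v\<bar> \<le> B"
  shows "integrable \<nu> g"
proof -
  interpret N: prob_space \<nu> by (rule nu_prob)
  show ?thesis
    apply (rule N.integrable_const_bound[where B=B])
    using AE_nu01 apply eventually_elim using b apply auto[1]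
    using g by (simp add: measurable_cong_sets[OF sets_nu refl])
qed

lemma exp_V:
  fixes g :: "real \<Rightarrow> real"
  assumes "i \<ge> 1" "g \<in> borel_measurable borel"
  shows "expectation (\<lambda>\<omega>. g (V i \<omega>)) = integral\<^sup>L \<nu> g"
  using integral_distr[OF Vmeas[OF assms(1)] assms(2)] dist[OF assms(1)] by simp

lemma int_V:
  fixes g :: "real \<Rightarrow> real"
  assumes "i \<ge> 1" "g \<in> borel_measurable borel" "integrable \<nu> g"
  shows "integrable \<Omega> (\<lambda>\<omega>. g (V i \<omega>))"
  using integrable_distr_eq[OF Vmeas[OF assms(1)] assms(2)] dist[OF assms(1)] assms(3) by simp

lemma AE_V01: assumes "i \<ge> 1" shows "AE \<omega> in \<Omega>. 0 \<le> V i \<omega> \<and> V i \<omega> \<le> 1"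
proof -
  have "AE x in distr \<Omega> borel (V i). 0 \<le> x \<and> x \<le> 1" unfolding dist[OF assms] by (rule AE_nu01)
  from AE_distrD[OF Vmeas[OF assms] this] show ?thesis .
qed

lemma indep_pair:
  assumes "a \<ge> 1" "b \<ge> 1" "a \<noteq> b"
  shows "indep_var borel (V a) borel (V b)"
proof -
  have "indep_var (PiM {a} (\<lambda>_. borel)) (\<lambda>\<omega>. restrict (\<lambda>i. V i \<omega>) {a})
                  (PiM {b} (\<lambda>_. borel)) (\<lambda>\<omega>. restrict (\<lambda>i. V i \<omega>) {b})"
    using ind assms by (intro indep_var_restrict) auto
  from indep_var_compose[OF this, of "\<lambda>x. x a" borel "\<lambda>x. x b" borel]
  show ?thesis by (simp add: comp_def)
qed

lemma indep_prod:
  fixes g h :: "real \<Rightarrow> real"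
  assumes "a \<ge> 1" "b \<ge> 1" "a \<noteq> b"
    and g: "g \<in> borel_measurable borel" "integrable \<nu> g"
    and h: "h \<in> borel_measurable borel" "integrable \<nu> h"
  shows "expectation (\<lambda>\<omega>. g (V a \<omega>) * h (V b \<omega>)) = integral\<^sup>L \<nu> g * integral\<^sup>L \<nu> h"
proof -
  have "indep_var borel (g \<circ> V a) borel (h \<circ> V b)"
    using indep_var_compose[OF indep_pair[OF assms(1-3)] g(1) h(1)] .
  then have "expectation (\<lambda>\<omega>. (g \<circ> V a) \<omega> * (h \<circ> V b) \<omega>) = expectation (g \<circ> V a) * expectation (h \<circ> V b)"
    using int_V[OF assms(1) g] int_V[OF assms(2) h]
    by (intro indep_var_lebesgue_integral) (auto simp: comp_def)
  then show ?thesis using exp_V[OF assms(1) g(1)] exp_V[OF assms(2) h(1)] by (simp add: comp_def)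
qed

lemma indep_prod_int:
  fixes g h :: "real \<Rightarrow> real"
  assumes "a \<ge> 1" "b \<ge> 1" "a \<noteq> b"
    and g: "g \<in> borel_measurable borel" "integrable \<nu> g"
    and h: "h \<in> borel_measurable borel" "integrable \<nu> h"
  shows "integrable \<Omega> (\<lambda>\<omega>. g (V a \<omega>) * h (V b \<omega>))"
proof -
  have "indep_var borel (g \<circ> V a) borel (h \<circ> V b)"
    using indep_var_compose[OF indep_pair[OF assms(1-3)] g(1) h(1)] .
  then have "integrable \<Omega> (\<lambda>\<omega>. (g \<circ> V a) \<omega> * (h \<circ> V b) \<omega>)"
    using int_V[OF assms(1) g] int_V[OF assms(2) h]
    by (intro indep_var_integrable) (auto simp: comp_def)
  then show ?thesis by (simp add: comp_def)
qed

lemma nu_bound: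
  assumes A: "A \<in> sets borel"
  shows "emeasure \<nu> A \<le> ennreal Mb * emeasure lborel A"
proof -
  have "emeasure \<nu> A = (\<integral>\<^sup>+ x. ennreal (f x) * indicator A x \<partial>lborel)"
    unfolding nudef using fmeas A by (intro emeasure_density) auto
  also have "\<dots> \<le> (\<integral>\<^sup>+ x. ennreal Mb * indicator A x \<partial>lborel)"
    by (intro nn_integral_mono mult_right_mono ennreal_leI) (auto simp: fb)
  also have "\<dots> = ennreal Mb * emeasure lborel A"
    using A by (intro nn_integral_cmult_indicator) auto
  finally show ?thesis .
qed

lemma nu_atom: "measure \<nu> {q} = 0"
proof -
  have "emeasure \<nu> {q} = 0" using nu_bound[of "{q}"] by simp
  then show ?thesis by (simp add: measure_def)
qed

lemma nu_Ioc: assumes "a \<le> b" shows "measure \<nu> {a<..b} \<le> Mb * (b - a)"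
proof -
  interpret N: prob_space \<nu> by (rule nu_prob)
  have "ennreal (measure \<nu> {a<..b}) \<le> ennreal Mb * ennreal (b - a)"
    using nu_bound[of "{a<..b}"] assms by (simp add: N.emeasure_eq_measure)
  also have "\<dots> = ennreal (Mb * (b - a))" using Mpos assms by (simp add: ennreal_mult)
  finally show ?thesis using Mpos assms by (simp add: ennreal_le_iff)
qed

definition "mn = integral\<^sup>L \<nu> (\<lambda>v. v)"
definition "gg q = 2 * integral\<^sup>L \<nu> (\<lambda>v. (mn - v) * indicator {..q} v)"

lemma gft_decomp:
  "gft q x y = indicator {..q} x * (y * indicator {q..} y) - (x * indicator {..q} x) * indicator {q..} y
     + (x * indicator {q..} x) * indicator {..q} y - indicator {q..} x * (y * indicator {..q} y)"
  by (auto simp: gft_def indicator_def max_def min_def)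

lemma exp_gft_const:
  assumes ab: "a \<ge> 1" "b \<ge> 1" "a \<noteq> b"
  shows "expectation (\<lambda>\<omega>. gft q (V a \<omega>) (V b \<omega>)) = gg q"
proof -
  interpret N: prob_space \<nu> by (rule nu_prob)
  define F1 where "F1 = (\<lambda>v::real. indicator {..q} v :: real)"
  define S1 where "S1 = (\<lambda>v::real. indicator {q..} v :: real)"
  define A1 where "A1 = (\<lambda>v::real. v * indicator {..q} v :: real)"
  define B1 where "B1 = (\<lambda>v::real. v * indicator {q..} v :: real)"
  have m: "F1 \<in> borel_measurable borel" "S1 \<in> borel_measurable borel"
     "A1 \<in> borel_measurable borel" "B1 \<in> borel_measurable borel"
    unfolding F1_def S1_def A1_def B1_def by auto
  have i: "integrable \<nu> F1" "integrable \<nu> S1" "integrable \<nu> A1" "integrable \<nu> B1"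
    using m by (auto intro!: integrable_nu[where B=1] simp: F1_def S1_def A1_def B1_def indicator_def)
  have pw: "\<And>\<omega>. gft q (V a \<omega>) (V b \<omega>) = F1 (V a \<omega>) * B1 (V b \<omega>) - A1 (V a \<omega>) * S1 (V b \<omega>)
     + B1 (V a \<omega>) * F1 (V b \<omega>) - S1 (V a \<omega>) * A1 (V b \<omega>)"
    unfolding F1_def S1_def A1_def B1_def by (rule gft_decomp)
  note E = indep_prod[OF ab m(1) i(1) m(4) i(4)] indep_prod[OF ab m(3) i(3) m(2) i(2)]
     indep_prod[OF ab m(4) i(4) m(1) i(1)] indep_prod[OF ab m(2) i(2) m(3) i(3)]
  note I = indep_prod_int[OF ab m(1) i(1) m(4) i(4)] indep_prod_int[OF ab m(3) i(3) m(2) i(2)]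
     indep_prod_int[OF ab m(4) i(4) m(1) i(1)] indep_prod_int[OF ab m(2) i(2) m(3) i(3)]
  have "expectation (\<lambda>\<omega>. gft q (V a \<omega>) (V b \<omega>)) =
     2 * (integral\<^sup>L \<nu> F1 * integral\<^sup>L \<nu> B1 - integral\<^sup>L \<nu> A1 * integral\<^sup>L \<nu> S1)"
    unfolding pw using E I by (simp add: Bochner_Integration.integral_diff Bochner_Integration.integral_add)
  also have "integral\<^sup>L \<nu> S1 = 1 - integral\<^sup>L \<nu> F1"
  proof -
    have "S1 = (\<lambda>v. 1 - F1 v + indicator {q} v)"
      by (auto simp: S1_def F1_def indicator_def fun_eq_iff)
    moreover have c: "integrable \<nu> (\<lambda>v. 1 - F1 v)" using i by auto
    moreover have "integrable \<nu> (indicator {q} :: real \<Rightarrow> real)"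
      by (rule integrable_nu[where B=1]) (auto simp: indicator_def)
    moreover have "measure \<nu> UNIV = 1" using N.prob_space by simp
    ultimately show ?thesis using i nu_atom[of q]
      by (simp add: Bochner_Integration.integral_diff Bochner_Integration.integral_add)
  qed
  also have "integral\<^sup>L \<nu> B1 = mn - integral\<^sup>L \<nu> A1"
  proof -
    have "B1 = (\<lambda>v. v - A1 v + q * indicator {q} v)"
      by (auto simp: B1_def A1_def indicator_def fun_eq_iff)
    moreover have "integrable \<nu> (\<lambda>v. v)" by (rule integrable_nu[where B=1]) auto
    moreover have "integrable \<nu> (\<lambda>v. v - A1 v)" using i calculation(2) by auto
    moreover have "integrable \<nu> (indicator {q} :: real \<Rightarrow> real)"
      by (rule integrable_nu[where B=1]) (auto simp: indicator_def)
    ultimately show ?thesis using i nu_atom[of q]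
      by (simp add: Bochner_Integration.integral_diff Bochner_Integration.integral_add mn_def)
  qed
  also have "2 * (integral\<^sup>L \<nu> F1 * (mn - integral\<^sup>L \<nu> A1) - integral\<^sup>L \<nu> A1 * (1 - integral\<^sup>L \<nu> F1))
     = 2 * (mn * integral\<^sup>L \<nu> F1 - integral\<^sup>L \<nu> A1)" by (simp add: algebra_simps)
  also have "\<dots> = gg q"
  proof -
    have "(\<lambda>v. (mn - v) * indicator {..q} v) = (\<lambda>v. mn * F1 v - A1 v)"
      by (auto simp: F1_def A1_def fun_eq_iff algebra_simps)
    then show ?thesis using i by (simp add: gg_def Bochner_Integration.integral_diff)
  qed
  finally show ?thesis .
qed

lemma gft_nonneg: "0 \<le> gft q x y"
  by (auto simp: gft_def)

lemma gg_nonneg: "0 \<le> gg q"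
proof -
  have "gg q = expectation (\<lambda>\<omega>. gft q (V 1 \<omega>) (V 2 \<omega>))" using exp_gft_const[of 1 2 q] by simp
  also have "\<dots> \<ge> 0" by (rule Bochner_Integration.integral_nonneg) (simp add: gft_nonneg)
  finally show ?thesis .
qed

lemma int_id: "integrable \<nu> (\<lambda>v. v)" by (rule integrable_nu[where B=1]) auto

lemma mn01: "0 \<le> mn \<and> mn \<le> 1"
proof -
  interpret N: prob_space \<nu> by (rule nu_prob)
  have "integral\<^sup>L \<nu> (\<lambda>v. 0) \<le> mn" unfolding mn_def
    by (rule integral_mono_AE) (use int_id AE_nu01 in auto)
  moreover have "mn \<le> integral\<^sup>L \<nu> (\<lambda>v. 1)" unfolding mn_def
    by (rule integral_mono_AE) (use int_id AE_nu01 in auto)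
  ultimately show ?thesis by (simp add: N.prob_space[simplified])
qed

lemma int_gg: "integrable \<nu> (\<lambda>v. (mn - v) * indicator {..q} v)"
  by (rule integrable_nu[where B="\<bar>mn\<bar> + 1"]) (auto simp: indicator_def)

lemma gg_le_m: "gg q \<le> gg mn"
  unfolding gg_def
proof (rule mult_left_mono, rule integral_mono[OF int_gg int_gg])
  fix v show "(mn - v) * indicator {..q} v \<le> (mn - v) * indicator {..mn} v"
    by (cases "v \<le> q"; cases "v \<le> mn") (auto simp: indicator_def)
qed simp

lemma gg_m_half: "gg mn \<le> 1/2"
proof -
  interpret N: prob_space \<nu> by (rule nu_prob)
  have "integral\<^sup>L \<nu> (\<lambda>v. (mn - v) * indicator {..mn} v) \<le> integral\<^sup>L \<nu> (\<lambda>v. mn - mn * v)"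
  proof (rule integral_mono_AE)
    show "integrable \<nu> (\<lambda>v. mn - mn * v)" using int_id by auto
    show "AE v in \<nu>. (mn - v) * indicator {..mn} v \<le> mn - mn * v"
      using AE_nu01 proof eventually_elim
      case (elim v)
      then have "v * mn \<le> v" "v * mn \<le> mn" using mn01
        by (auto intro: mult_left_le mult_left_le_one_le)
      then show ?case using elim mn01
        by (auto simp: indicator_def algebra_simps)
    qed
  qed (rule int_gg)
  also have "\<dots> = mn - mn * mn" using int_id
    by (simp add: Bochner_Integration.integral_diff N.prob_space[simplified] mn_def)
  finally have "gg mn \<le> 2 * (mn - mn * mn)" unfolding gg_def by simp
  also have "\<dots> \<le> 1/2" using sum_squares_ge_zero[of "2*mn - 1" 0]
    by (simp add: power2_eq_square algebra_simps)
  finally show ?thesis .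
qed

lemma gg_diff: "gg mn - gg q \<le> 2 * Mb * (q - mn)^2"
proof -
  interpret N: prob_space \<nu> by (rule nu_prob)
  define lo where "lo = min q mn"
  define hi where "hi = max q mn"
  have "gg mn - gg q = 2 * integral\<^sup>L \<nu> (\<lambda>v. (mn - v) * indicator {..mn} v - (mn - v) * indicator {..q} v)"
    unfolding gg_def using int_gg int_gg by (simp add: Bochner_Integration.integral_diff)
  also have "integral\<^sup>L \<nu> (\<lambda>v. (mn - v) * indicator {..mn} v - (mn - v) * indicator {..q} v)
     \<le> integral\<^sup>L \<nu> (\<lambda>v. \<bar>q - mn\<bar> * indicator {lo<..hi} v)"
  proof (rule integral_mono)
    show "integrable \<nu> (\<lambda>v. \<bar>q - mn\<bar> * indicator {lo<..hi} v)"
      by (rule integrable_nu[where B="\<bar>q - mn\<bar>"]) (auto simp: indicator_def)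
    show "integrable \<nu> (\<lambda>v. (mn - v) * indicator {..mn} v - (mn - v) * indicator {..q} v)"
      using int_gg int_gg by auto
    fix v show "(mn - v) * indicator {..mn} v - (mn - v) * indicator {..q} v \<le> \<bar>q - mn\<bar> * indicator {lo<..hi} v"
      by (auto simp: indicator_def lo_def hi_def)
  qed
  also have "\<dots> = \<bar>q - mn\<bar> * measure \<nu> {lo<..hi}" by simp
  also have "\<dots> \<le> \<bar>q - mn\<bar> * (Mb * (hi - lo))"
    by (intro mult_left_mono nu_Ioc) (auto simp: lo_def hi_def)
  also have "hi - lo = \<bar>q - mn\<bar>" by (auto simp: lo_def hi_def)
  finally have "gg mn - gg q \<le> 2 * (\<bar>q - mn\<bar> * (Mb * \<bar>q - mn\<bar>))" by simp
  moreover have "\<bar>q - mn\<bar> * (Mb * \<bar>q - mn\<bar>) = Mb * (q - mn)^2"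
    by (metis abs_mult_self_eq mult.left_commute power2_eq_square)
  ultimately show ?thesis by simp
qed

lemma int_bdd:
  fixes g :: "'a \<Rightarrow> real"
  assumes "g \<in> borel_measurable \<Omega>" "\<And>\<omega>. \<bar>g \<omega>\<bar> \<le> B"
  shows "integrable \<Omega> g"
  by (rule integrable_const_bound[where B=B]) (use assms in auto)

definition thr :: "nat \<Rightarrow> nat \<Rightarrow> real" where "thr n i = real ((i+1) div 2) / real n"
definition Z :: "nat \<Rightarrow> nat \<Rightarrow> 'a \<Rightarrow> real" where "Z n i \<omega> = (if thr n i \<le> V i \<omega> then 1 else 0)"
definition Pn :: "nat \<Rightarrow> 'a \<Rightarrow> real" where "Pn n \<omega> = (1 / (2 * real n)) * (\<Sum>i=1..2*n. Z n i \<omega>)"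
definition pz :: "nat \<Rightarrow> nat \<Rightarrow> real" where "pz n i = integral\<^sup>L \<nu> (\<lambda>v. if thr n i \<le> v then 1 else 0)"

lemma div_facts: "s \<ge> 1 \<Longrightarrow> (2 * s-1+1) div 2 = s \<and> (2 * s+1) div 2 = (s::nat)"
  by presburger

lemma etc_eq: assumes "n < t" shows "etc_price n V t \<omega> = Pn n \<omega>"
proof -
  have "(\<Sum>s=1..n. ((if real s / real n \<le> V (2 * s - 1) \<omega> then 1 else 0)
                    + (if real s / real n \<le> V (2 * s) \<omega> then 1 else 0)))
      = (\<Sum>s=1..n. Z n (2 * s-1) \<omega> + Z n (2 * s) \<omega>)"
    by (intro sum.cong refl) (auto simp: Z_def thr_def div_facts)
  also have "\<dots> = (\<Sum>i=1..2*n. Z n i \<omega>)" by (rule reindex2)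
  finally show ?thesis using assms by (simp add: etc_price_def Pn_def)
qed

lemma Z_meas: "i \<ge> 1 \<Longrightarrow> Z n i \<in> borel_measurable \<Omega>"
  unfolding Z_def[abs_def] using Vmeas[of i] by measurable

lemma Z01: "0 \<le> Z n i \<omega> \<and> Z n i \<omega> \<le> 1" by (simp add: Z_def)

lemma Pn_meas: "Pn n \<in> borel_measurable \<Omega>"
  unfolding Pn_def[abs_def]
  by (intro borel_measurable_times borel_measurable_const borel_measurable_sum Z_meas) auto

lemma Pn01: assumes "n \<ge> 1" shows "0 \<le> Pn n \<omega> \<and> Pn n \<omega> \<le> 1"
proof -
  have "(\<Sum>i=1..2*n. Z n i \<omega>) \<le> (\<Sum>i=1..2*n. 1)" by (intro sum_mono) (simp add: Z01)
  moreover have "0 \<le> (\<Sum>i=1..2*n. Z n i \<omega>)" by (intro sum_nonneg) (simp add: Z01)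
  ultimately show ?thesis using assms by (auto simp: Pn_def field_simps)
qed

lemma pz_int: "integrable \<nu> (\<lambda>v. if thr n i \<le> v then 1 else 0 :: real)"
  by (rule integrable_nu[where B=1]) auto

lemma EZ: "i \<ge> 1 \<Longrightarrow> expectation (Z n i) = pz n i"
  unfolding Z_def[abs_def] pz_def by (rule exp_V) auto

lemma pz01: "0 \<le> pz n i \<and> pz n i \<le> 1"
proof -
  interpret N: prob_space \<nu> by (rule nu_prob)
  have "pz n i \<le> integral\<^sup>L \<nu> (\<lambda>v. 1)" unfolding pz_def
    by (rule integral_mono[OF pz_int]) auto
  moreover have "0 \<le> pz n i" unfolding pz_def by (rule Bochner_Integration.integral_nonneg) auto
  ultimately show ?thesis by (simp add: N.prob_space[simplified])
qed

lemma EPn: "expectation (Pn n) = (1 / (2 * real n)) * (\<Sum>i=1..2*n. pz n i)"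
proof -
  have e1: "expectation (Pn n) = (1 / (2 * real n)) * expectation (\<lambda>\<omega>. \<Sum>i=1..2*n. Z n i \<omega>)"
    unfolding Pn_def[abs_def] by (rule integral_mult_right_zero)
  have "expectation (\<lambda>\<omega>. \<Sum>i=1..2*n. Z n i \<omega>) = (\<Sum>i=1..2*n. expectation (Z n i))"
  proof (rule Bochner_Integration.integral_sum)
    fix i assume "i \<in> {1..2*n}"
    then show "integrable \<Omega> (Z n i)"
      by (intro int_bdd[where B=1] Z_meas) (auto simp: Z_def)
  qed
  with e1 have "expectation (Pn n) = (1 / (2 * real n)) * (\<Sum>i=1..2*n. expectation (Z n i))" by simp
  also have "\<dots> = (1 / (2 * real n)) * (\<Sum>i=1..2*n. pz n i)"
    by (intro arg_cong[where f="\<lambda>x. _ * x"] sum.cong refl EZ) auto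
  finally show ?thesis .
qed

lemma cross:
  assumes "i \<ge> 1" "j \<ge> 1"
  shows "expectation (\<lambda>\<omega>. (Z n i \<omega> - pz n i) * (Z n j \<omega> - pz n j)) \<le> (if i = j then 1 else 0)"
proof (cases "i = j")
  case True
  have pw: "\<bar>(Z n i \<omega> - pz n i) * (Z n j \<omega> - pz n j)\<bar> \<le> 1" for \<omega>
  proof -
    have "\<bar>Z n i \<omega> - pz n i\<bar> \<le> 1" using Z01[of n i \<omega>] pz01[of n i] by (auto simp: abs_le_iff)
    then have "(Z n i \<omega> - pz n i)^2 \<le> 1" by (simp add: abs_square_le_1)
    then show ?thesis using True by (simp add: power2_eq_square abs_mult_self_eq)
  qed
  have "expectation (\<lambda>\<omega>. (Z n i \<omega> - pz n i) * (Z n j \<omega> - pz n j)) \<le> expectation (\<lambda>\<omega>. 1)"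
  proof (rule integral_mono)
    show "integrable \<Omega> (\<lambda>\<omega>. (Z n i \<omega> - pz n i) * (Z n j \<omega> - pz n j))"
      using pw Z_meas[OF assms(1)] Z_meas[OF assms(2)] by (intro int_bdd[where B=1]) auto
    fix \<omega> show "(Z n i \<omega> - pz n i) * (Z n j \<omega> - pz n j) \<le> 1" using pw[of \<omega>] by linarith
  qed simp
  then show ?thesis using True prob_space by simp
next
  case False
  interpret N: prob_space \<nu> by (rule nu_prob)
  let ?g = "\<lambda>v. (if thr n i \<le> v then 1 else 0) - pz n i"
  let ?h = "\<lambda>v. (if thr n j \<le> v then 1 else 0) - pz n j"
  have ig: "integrable \<nu> ?g" "integrable \<nu> ?h" using pz_int by auto
  have "expectation (\<lambda>\<omega>. ?g (V i \<omega>) * ?h (V j \<omega>)) = integral\<^sup>L \<nu> ?g * integral\<^sup>L \<nu> ?h"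
    by (rule indep_prod[OF assms False]) (use ig in auto)
  also have "integral\<^sup>L \<nu> ?g = 0"
    using pz_int N.prob_space by (simp add: Bochner_Integration.integral_diff pz_def)
  finally show ?thesis using False by (simp add: Z_def)
qed

lemma absY: "\<bar>Z n i \<omega> - pz n i\<bar> \<le> 1"
  using Z01[of n i \<omega>] pz01[of n i] by (auto simp: abs_le_iff)

lemma Y_int: assumes "i \<ge> 1" "j \<ge> 1"
  shows "integrable \<Omega> (\<lambda>\<omega>. (Z n i \<omega> - pz n i) * (Z n j \<omega> - pz n j))"
proof (rule int_bdd[where B=1])
  show "(\<lambda>\<omega>. (Z n i \<omega> - pz n i) * (Z n j \<omega> - pz n j)) \<in> borel_measurable \<Omega>"
    using Z_meas[OF assms(1)] Z_meas[OF assms(2)] by measurable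
  fix \<omega> show "\<bar>(Z n i \<omega> - pz n i) * (Z n j \<omega> - pz n j)\<bar> \<le> 1"
    unfolding abs_mult using absY[of n i \<omega>] absY[of n j \<omega>] by (intro mult_le_one) auto
qed

lemma var_Pn: assumes n: "n \<ge> 1"
  shows "expectation (\<lambda>\<omega>. (Pn n \<omega> - expectation (Pn n))^2) \<le> 1 / (2 * real n)"
proof -
  define c where "c = 1 / (2 * real n)"
  have d: "Pn n \<omega> - expectation (Pn n) = c * (\<Sum>i=1..2*n. Z n i \<omega> - pz n i)" for \<omega>
    unfolding Pn_def EPn c_def by (simp add: sum_subtractf algebra_simps)
  have sq: "(Pn n \<omega> - expectation (Pn n))^2 =
      c^2 * (\<Sum>i=1..2*n. \<Sum>j=1..2*n. (Z n i \<omega> - pz n i) * (Z n j \<omega> - pz n j))" for \<omega>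
    unfolding d by (simp add: power2_eq_square sum_product algebra_simps)
  have "expectation (\<lambda>\<omega>. (Pn n \<omega> - expectation (Pn n))^2) =
      c^2 * (\<Sum>i=1..2*n. \<Sum>j=1..2*n. expectation (\<lambda>\<omega>. (Z n i \<omega> - pz n i) * (Z n j \<omega> - pz n j)))"
  proof -
    have "expectation (\<lambda>\<omega>. (Pn n \<omega> - expectation (Pn n))^2) =
      c^2 * expectation (\<lambda>\<omega>. \<Sum>i=1..2*n. \<Sum>j=1..2*n. (Z n i \<omega> - pz n i) * (Z n j \<omega> - pz n j))"
      unfolding sq by (rule integral_mult_right_zero)
    also have "expectation (\<lambda>\<omega>. \<Sum>i=1..2*n. \<Sum>j=1..2*n. (Z n i \<omega> - pz n i) * (Z n j \<omega> - pz n j))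
       = (\<Sum>i=1..2*n. expectation (\<lambda>\<omega>. \<Sum>j=1..2*n. (Z n i \<omega> - pz n i) * (Z n j \<omega> - pz n j)))"
      by (rule Bochner_Integration.integral_sum) (auto intro!: Y_int)
    also have "\<dots> = (\<Sum>i=1..2*n. \<Sum>j=1..2*n. expectation (\<lambda>\<omega>. (Z n i \<omega> - pz n i) * (Z n j \<omega> - pz n j)))"
      by (intro sum.cong refl Bochner_Integration.integral_sum Y_int) auto
    finally show ?thesis .
  qed
  also have "\<dots> \<le> c^2 * (\<Sum>i=1..2*n. \<Sum>j=1..2*n. (if i = j then 1 else 0))"
    by (intro mult_left_mono sum_mono cross) auto
  also have "(\<Sum>i=1..2*n. \<Sum>j=1..2*n. (if i = j then 1 else 0 :: real)) = real (2 * n)"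
    by simp
  also have "c^2 * real (2 * n) = 1 / (2 * real n)" using n by (simp add: c_def power2_eq_square field_simps)
  finally show ?thesis .
qed

lemma bias_Pn: assumes n: "n \<ge> 1"
  shows "mn - 1 / real n \<le> expectation (Pn n) \<and> expectation (Pn n) \<le> mn"
proof -
  interpret N: prob_space \<nu> by (rule nu_prob)
  define c where "c = (\<lambda>v. (1 / real n) * (\<Sum>s=1..n. if real s / real n \<le> v then 1 else 0 :: real))"
  have pw: "(\<Sum>i=1..2*n. if thr n i \<le> v then 1 else 0 :: real) = 2 * (\<Sum>s=1..n. if real s / real n \<le> v then 1 else 0)" for v
  proof -
    have "(\<Sum>i=1..2*n. if thr n i \<le> v then 1 else 0 :: real) =
       (\<Sum>s=1..n. (if thr n (2 * s - 1) \<le> v then 1 else 0) + (if thr n (2 * s) \<le> v then 1 else 0))"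
      by (rule reindex2[symmetric])
    also have "\<dots> = (\<Sum>s=1..n. 2 * (if real s / real n \<le> v then 1 else 0))"
      by (intro sum.cong refl) (auto simp: thr_def div_facts)
    finally show ?thesis by (simp add: sum_distrib_left)
  qed
  have "(\<Sum>i=1..2*n. pz n i) = integral\<^sup>L \<nu> (\<lambda>v. \<Sum>i=1..2*n. if thr n i \<le> v then 1 else 0 :: real)"
    unfolding pz_def by (rule Bochner_Integration.integral_sum[symmetric]) (rule pz_int)
  also have "\<dots> = integral\<^sup>L \<nu> (\<lambda>v. 2 * real n * c v)"
    apply (intro Bochner_Integration.integral_cong refl)
    subgoal for v unfolding pw c_def using n by simp
    done
  also have "\<dots> = 2 * real n * integral\<^sup>L \<nu> c" by (rule integral_mult_right_zero)
  finally have E: "expectation (Pn n) = integral\<^sup>L \<nu> c" using n by (simp add: EPn)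
  have cm: "c \<in> borel_measurable borel" unfolding c_def by measurable
  have ci: "integrable \<nu> c"
  proof (rule integrable_nu[where B=1, OF cm])
    fix v :: real assume "0 \<le> v" "v \<le> 1"
    moreover have "0 \<le> c v" unfolding c_def by (intro mult_nonneg_nonneg sum_nonneg) auto
    moreover have "c v \<le> v" using count_bounds[OF n, of v] \<open>0 \<le> v\<close> \<open>v \<le> 1\<close> by (simp add: c_def)
    ultimately show "\<bar>c v\<bar> \<le> 1" by simp
  qed
  have "integral\<^sup>L \<nu> (\<lambda>v. v - 1 / real n) \<le> integral\<^sup>L \<nu> c"
    by (rule integral_mono_AE) (use int_id ci AE_nu01 count_bounds[OF n] in \<open>auto simp: c_def\<close>)
  moreover have "integral\<^sup>L \<nu> c \<le> integral\<^sup>L \<nu> (\<lambda>v. v)"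
    by (rule integral_mono_AE) (use int_id ci AE_nu01 count_bounds[OF n] in \<open>auto simp: c_def\<close>)
  moreover have "integral\<^sup>L \<nu> (\<lambda>v. v - 1 / real n) = mn - 1 / real n"
    using int_id by (simp add: Bochner_Integration.integral_diff mn_def N.prob_space[simplified])
  ultimately show ?thesis using E by (simp add: mn_def)
qed

lemma sq_Pn: assumes n: "n \<ge> 1"
  shows "expectation (\<lambda>\<omega>. (Pn n \<omega> - mn)^2) \<le> 1 / (real n)^2 + 1 / (2 * real n)"
proof -
  define E where "E = expectation (Pn n)"
  define b where "b = E - mn"
  have b: "-(1 / real n) \<le> b \<and> b \<le> 0" using bias_Pn[OF n] by (simp add: b_def E_def)
  have pw: "(Pn n \<omega> - mn)^2 = (Pn n \<omega> - E)^2 + (2 * b * Pn n \<omega> + (b^2 - 2 * b * E))" for \<omega>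
    by (simp add: b_def power2_eq_square algebra_simps)
  have Pm: "Pn n \<in> borel_measurable \<Omega>" by (rule Pn_meas)
  have i1: "integrable \<Omega> (\<lambda>\<omega>. (Pn n \<omega> - E)^2)"
  proof (rule int_bdd[where B="(1 + \<bar>E\<bar>)^2"])
    show "(\<lambda>\<omega>. (Pn n \<omega> - E)^2) \<in> borel_measurable \<Omega>" using Pm by measurable
    fix \<omega>
    have "\<bar>Pn n \<omega> - E\<bar> \<le> 1 + \<bar>E\<bar>" using Pn01[OF n, of \<omega>] by (simp add: abs_if)
    then have "\<bar>Pn n \<omega> - E\<bar>^2 \<le> (1 + \<bar>E\<bar>)^2" by (intro power_mono) auto
    then show "\<bar>(Pn n \<omega> - E)^2\<bar> \<le> (1 + \<bar>E\<bar>)^2" by (simp add: power_abs)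
  qed
  have i2: "integrable \<Omega> (Pn n)"
    by (rule int_bdd[where B=1]) (use Pm Pn01[OF n] in auto)
  have "expectation (\<lambda>\<omega>. (Pn n \<omega> - mn)^2) = expectation (\<lambda>\<omega>. (Pn n \<omega> - E)^2) + (2 * b * E + (b^2 - 2 * b * E))"
    unfolding pw using i1 i2 by (simp add: Bochner_Integration.integral_add prob_space E_def)
  also have "\<dots> = expectation (\<lambda>\<omega>. (Pn n \<omega> - E)^2) + b^2" by simp
  also have "\<dots> \<le> 1 / (2 * real n) + (1 / real n)^2"
  proof (rule add_mono)
    show "expectation (\<lambda>\<omega>. (Pn n \<omega> - E)^2) \<le> 1 / (2 * real n)" unfolding E_def by (rule var_Pn[OF n])
    have "\<bar>b\<bar> \<le> 1 / real n" using b by auto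
    then have "\<bar>b\<bar>^2 \<le> (1 / real n)^2" by (intro power_mono) auto
    then show "b^2 \<le> (1 / real n)^2" by simp
  qed
  finally show ?thesis by (simp add: power_divide)
qed

lemma gft_meas: "(\<lambda>z. gft (fst z) (fst (snd z)) (snd (snd z))) \<in> borel_measurable (borel \<Otimes>\<^sub>M (borel \<Otimes>\<^sub>M borel))"
  unfolding gft_def by measurable

lemma gft_le1: "0 \<le> x \<Longrightarrow> x \<le> 1 \<Longrightarrow> 0 \<le> y \<Longrightarrow> y \<le> 1 \<Longrightarrow> gft q x y \<le> 1"
  by (auto simp: gft_def)

lemma exploit:
  assumes n: "n \<ge> 1" and ab: "a \<noteq> b" "a > 2 * n" "b > 2 * n"
  shows "gg mn - 2 * Mb * expectation (\<lambda>\<omega>. (Pn n \<omega> - mn)^2)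
     \<le> expectation (\<lambda>\<omega>. gft (Pn n \<omega>) (V a \<omega>) (V b \<omega>))"
proof -
  have a1: "a \<ge> 1" "b \<ge> 1" using ab by auto
  note Va[measurable] = Vmeas[OF a1(1)]
  note Vb[measurable] = Vmeas[OF a1(2)]
  note Pm[measurable] = Pn_meas[of n]
  have ivr: "indep_var (PiM {1..2*n} (\<lambda>_. borel)) (\<lambda>\<omega>. restrict (\<lambda>i. V i \<omega>) {1..2*n})
                  (PiM {a,b} (\<lambda>_. borel)) (\<lambda>\<omega>. restrict (\<lambda>i. V i \<omega>) {a,b})"
    using ind ab by (intro indep_var_restrict) auto
  define \<phi> where "\<phi> = (\<lambda>x. (1/(2*real n)) * (\<Sum>i=1..2*n. if thr n i \<le> x i then 1 else 0::real))"
  have \<phi>m: "\<phi> \<in> borel_measurable (PiM {1..2*n} (\<lambda>_. borel))"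
    unfolding \<phi>_def
  proof (intro borel_measurable_times borel_measurable_const borel_measurable_sum)
    fix i assume i: "i \<in> {1..2*n}"
    have [measurable]: "(\<lambda>x. x i) \<in> borel_measurable (PiM {1..2*n} (\<lambda>_. borel::real measure))"
      using i by (rule measurable_component_singleton)
    show "(\<lambda>x. if thr n i \<le> x i then 1 else 0::real) \<in> borel_measurable (PiM {1..2*n} (\<lambda>_. borel))"
      by measurable
  qed
  have phiR: "\<phi> (restrict (\<lambda>i. V i \<omega>) {1..2*n}) = Pn n \<omega>" for \<omega>
    by (auto simp: \<phi>_def Pn_def Z_def intro!: arg_cong[where f="\<lambda>x. _ * x"] sum.cong)
  define R1 where "R1 = (\<lambda>\<omega>. restrict (\<lambda>i. V i \<omega>) {1..2*n})"
  define R2 where "R2 = (\<lambda>\<omega>. restrict (\<lambda>i. V i \<omega>) {a,b})"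
  have R1m[measurable]: "R1 \<in> measurable \<Omega> (PiM {1..2*n} (\<lambda>_. borel))"
    unfolding R1_def by (rule measurable_restrict) (auto intro: Vmeas)
  have R2m[measurable]: "R2 \<in> measurable \<Omega> (PiM {a,b} (\<lambda>_. borel))"
    unfolding R2_def by (rule measurable_restrict) (use a1 in \<open>auto intro: Vmeas\<close>)
  have am[measurable]: "(\<lambda>x. x a) \<in> borel_measurable (PiM {a,b} (\<lambda>_. borel::real measure))"
    by (rule measurable_component_singleton) auto
  have bm[measurable]: "(\<lambda>x. x b) \<in> borel_measurable (PiM {a,b} (\<lambda>_. borel::real measure))"
    by (rule measurable_component_singleton) auto
  note \<phi>m[measurable]
  define \<mu>1 where "\<mu>1 = distr \<Omega> (PiM {1..2*n} (\<lambda>_. borel)) R1"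
  define \<mu>2 where "\<mu>2 = distr \<Omega> (PiM {a,b} (\<lambda>_. borel)) R2"
  have jd: "\<mu>1 \<Otimes>\<^sub>M \<mu>2 = distr \<Omega> (PiM {1..2*n} (\<lambda>_. borel) \<Otimes>\<^sub>M PiM {a,b} (\<lambda>_. borel)) (\<lambda>\<omega>. (R1 \<omega>, R2 \<omega>))"
    using ivr unfolding indep_var_distribution_eq \<mu>1_def \<mu>2_def R1_def R2_def by simp
  interpret P1: prob_space \<mu>1 unfolding \<mu>1_def by (rule prob_space_distr[OF R1m])
  interpret P2: prob_space \<mu>2 unfolding \<mu>2_def by (rule prob_space_distr[OF R2m])
  interpret PQ: pair_prob_space \<mu>1 \<mu>2 ..
  define H where "H = (\<lambda>z::(nat \<Rightarrow> real) \<times> (nat \<Rightarrow> real). gft (\<phi> (fst z)) (snd z a) (snd z b))"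
  note gft_meas[measurable]
  have Hm[measurable]: "H \<in> borel_measurable (PiM {1..2*n} (\<lambda>_. borel) \<Otimes>\<^sub>M PiM {a,b} (\<lambda>_. borel))"
  proof -
    have "(\<lambda>z::(nat \<Rightarrow> real) \<times> (nat \<Rightarrow> real). (\<phi> (fst z), (snd z a, snd z b)))
       \<in> measurable (PiM {1..2*n} (\<lambda>_. borel) \<Otimes>\<^sub>M PiM {a,b} (\<lambda>_. borel)) (borel \<Otimes>\<^sub>M (borel \<Otimes>\<^sub>M borel))"
      by measurable
    from measurable_compose[OF this gft_meas] show ?thesis by (simp add: H_def comp_def)
  qed
  have gm[measurable]: "(\<lambda>\<omega>. (R1 \<omega>, R2 \<omega>)) \<in> measurable \<Omega> (PiM {1..2*n} (\<lambda>_. borel) \<Otimes>\<^sub>M PiM {a,b} (\<lambda>_. borel))"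
    by measurable
  have HR: "H (R1 \<omega>, R2 \<omega>) = gft (Pn n \<omega>) (V a \<omega>) (V b \<omega>)" for \<omega>
    using phiR[of \<omega>] by (simp add: H_def R1_def R2_def)
  have intO: "integrable \<Omega> (\<lambda>\<omega>. gft (Pn n \<omega>) (V a \<omega>) (V b \<omega>))"
  proof (rule integrable_const_bound[where B=1])
    show "AE \<omega> in \<Omega>. norm (gft (Pn n \<omega>) (V a \<omega>) (V b \<omega>)) \<le> 1"
      using AE_V01[OF a1(1)] AE_V01[OF a1(2)]
      by eventually_elim (auto simp: gft_nonneg gft_le1)
    have "(\<lambda>\<omega>. H (R1 \<omega>, R2 \<omega>)) \<in> borel_measurable \<Omega>" by measurable
    then show "(\<lambda>\<omega>. gft (Pn n \<omega>) (V a \<omega>) (V b \<omega>)) \<in> borel_measurable \<Omega>" by (simp add: HR)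
  qed
  have intH: "integrable (\<mu>1 \<Otimes>\<^sub>M \<mu>2) H"
    unfolding jd using intO by (subst integrable_distr_eq[OF gm Hm]) (simp add: HR)
  have E1: "expectation (\<lambda>\<omega>. gft (Pn n \<omega>) (V a \<omega>) (V b \<omega>)) = integral\<^sup>L (\<mu>1 \<Otimes>\<^sub>M \<mu>2) H"
    unfolding jd by (subst integral_distr[OF gm Hm]) (simp add: HR)
  have gab: "(\<lambda>y::nat\<Rightarrow>real. gft c (y a) (y b)) \<in> borel_measurable (PiM {a,b} (\<lambda>_. borel))" for c
    unfolding gft_def by measurable
  have inner: "(\<integral>y. H (x, y) \<partial>\<mu>2) = gg (\<phi> x)" for x
  proof -
    have "(\<integral>y. H (x, y) \<partial>\<mu>2) = expectation (\<lambda>\<omega>. H (x, R2 \<omega>))"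
      unfolding \<mu>2_def by (rule integral_distr[OF R2m]) (simp add: H_def gab)
    also have "\<dots> = gg (\<phi> x)" using exp_gft_const[OF a1 ab(1)] by (simp add: H_def R2_def)
    finally show ?thesis .
  qed
  have Fub: "integral\<^sup>L (\<mu>1 \<Otimes>\<^sub>M \<mu>2) H = (\<integral>x. gg (\<phi> x) \<partial>\<mu>1)"
    using PQ.integral_fst'[OF intH] by (simp add: inner)
  have intg: "integrable \<mu>1 (\<lambda>x. gg (\<phi> x))"
    using PQ.integrable_fst'[OF intH] by (simp add: inner)
  have phim2: "(\<lambda>x. gg mn - 2 * Mb * (\<phi> x - mn)^2) \<in> borel_measurable (PiM {1..2*n} (\<lambda>_. borel))"
    by measurable
  have intO2: "integrable \<Omega> (\<lambda>\<omega>. gg mn - 2 * Mb * (Pn n \<omega> - mn)^2)"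
  proof (rule int_bdd[where B="\<bar>gg mn\<bar> + 2 * Mb * 4"])
    show "(\<lambda>\<omega>. gg mn - 2 * Mb * (Pn n \<omega> - mn)^2) \<in> borel_measurable \<Omega>" by measurable
    fix \<omega>
    have "\<bar>Pn n \<omega> - mn\<bar> \<le> 2" using Pn01[OF n, of \<omega>] mn01 by (simp add: abs_if)
    then have "\<bar>Pn n \<omega> - mn\<bar>^2 \<le> 2^2" by (intro power_mono) auto
    then have "(Pn n \<omega> - mn)^2 \<le> 4" by (simp add: power_abs[symmetric])
    then have X: "Mb * (Pn n \<omega> - mn)^2 \<le> Mb * 4" "0 \<le> Mb * (Pn n \<omega> - mn)^2"
      using Mpos by (auto intro: mult_left_mono)
    have "\<bar>gg mn - 2 * Mb * (Pn n \<omega> - mn)^2\<bar> \<le> \<bar>gg mn\<bar> + \<bar>2 * Mb * (Pn n \<omega> - mn)^2\<bar>"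
      by (rule abs_triangle_ineq4)
    also have "\<bar>2 * Mb * (Pn n \<omega> - mn)^2\<bar> = 2 * (Mb * (Pn n \<omega> - mn)^2)" using X by simp
    finally show "\<bar>gg mn - 2 * Mb * (Pn n \<omega> - mn)^2\<bar> \<le> \<bar>gg mn\<bar> + 2 * Mb * 4"
      using X by linarith
  qed
  have intO3: "integrable \<Omega> (\<lambda>\<omega>. (Pn n \<omega> - mn)^2)"
  proof (rule int_bdd[where B=4])
    show "(\<lambda>\<omega>. (Pn n \<omega> - mn)^2) \<in> borel_measurable \<Omega>" by measurable
    fix \<omega>
    have "\<bar>Pn n \<omega> - mn\<bar> \<le> 2" using Pn01[OF n, of \<omega>] mn01 by (simp add: abs_if)
    then have "\<bar>Pn n \<omega> - mn\<bar>^2 \<le> 2^2" by (intro power_mono) auto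
    then show "\<bar>(Pn n \<omega> - mn)^2\<bar> \<le> 4" by (simp add: power_abs[symmetric])
  qed
  have "gg mn - 2 * Mb * expectation (\<lambda>\<omega>. (Pn n \<omega> - mn)^2) = expectation (\<lambda>\<omega>. gg mn - 2 * Mb * (Pn n \<omega> - mn)^2)"
    using intO3 by (simp add: Bochner_Integration.integral_diff prob_space)
  also have "\<dots> = (\<integral>x. gg mn - 2 * Mb * (\<phi> x - mn)^2 \<partial>\<mu>1)"
    unfolding \<mu>1_def integral_distr[OF R1m phim2] by (simp only: R1_def phiR)
  also have "\<dots> \<le> (\<integral>x. gg (\<phi> x) \<partial>\<mu>1)"
  proof (rule integral_mono[OF _ intg])
    show "integrable \<mu>1 (\<lambda>x. gg mn - 2 * Mb * (\<phi> x - mn)^2)"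
      unfolding \<mu>1_def integrable_distr_eq[OF R1m phim2] using intO2 by (simp only: R1_def phiR)
    fix x show "gg mn - 2 * Mb * (\<phi> x - mn)^2 \<le> gg (\<phi> x)" using gg_diff[of "\<phi> x"] by simp
  qed
  finally show ?thesis using E1 Fub by simp
qed

lemma intG:
  assumes t: "t \<ge> 1" and Q[measurable]: "Q \<in> borel_measurable \<Omega>"
  shows "integrable \<Omega> (\<lambda>\<omega>. GFT V t (Q \<omega>) \<omega>)"
proof (rule integrable_const_bound[where B=1])
  have a1: "2 * t - 1 \<ge> 1" "2 * t \<ge> 1" using t by auto
  note [measurable] = Vmeas[OF a1(1)] Vmeas[OF a1(2)]
  show "AE \<omega> in \<Omega>. norm (GFT V t (Q \<omega>) \<omega>) \<le> 1"
    using AE_V01[OF a1(1)] AE_V01[OF a1(2)]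
    by eventually_elim (auto simp: GFT_def gft_nonneg gft_le1)
  have "(\<lambda>\<omega>. gft (Q \<omega>) (V (2 * t - 1) \<omega>) (V (2 * t) \<omega>)) \<in> borel_measurable \<Omega>"
    unfolding gft_def by measurable
  then show "(\<lambda>\<omega>. GFT V t (Q \<omega>) \<omega>) \<in> borel_measurable \<Omega>" by (simp add: GFT_def)
qed

lemma S1_le: "(SUP p\<in>{0..1}. expectation (\<lambda>\<omega>. \<Sum>t=1..T. GFT V t p \<omega>)) \<le> real T * gg mn"
proof (rule cSUP_least)
  fix p :: real
  have "expectation (\<lambda>\<omega>. \<Sum>t=1..T. GFT V t p \<omega>) = (\<Sum>t=1..T. expectation (\<lambda>\<omega>. GFT V t p \<omega>))"
    by (rule Bochner_Integration.integral_sum) (auto intro!: intG)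
  also have "\<dots> = (\<Sum>t=1..T. gg p)"
  proof (rule sum.cong[OF refl])
    fix t assume "t \<in> {1..T}"
    then have "2 * t - 1 \<ge> 1" "2 * t \<ge> 1" "2 * t - 1 \<noteq> 2 * t" by auto
    from exp_gft_const[OF this] show "expectation (\<lambda>\<omega>. GFT V t p \<omega>) = gg p" by (simp add: GFT_def)
  qed
  also have "\<dots> \<le> real T * gg mn" using gg_le_m[of p] by (simp add: mult_left_mono)
  finally show "expectation (\<lambda>\<omega>. \<Sum>t=1..T. GFT V t p \<omega>) \<le> real T * gg mn" .
qed simp

lemma regret_triv: "regret \<Omega> V P T \<le> real T / 2"
proof -
  have "0 \<le> expectation (\<lambda>\<omega>. \<Sum>t=1..T. GFT V t (P t \<omega>) \<omega>)"
    by (intro Bochner_Integration.integral_nonneg sum_nonneg) (simp add: GFT_def gft_nonneg)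
  moreover have "real T * gg mn \<le> real T * (1/2)" using gg_m_half by (intro mult_left_mono) auto
  ultimately show ?thesis using S1_le[of T] unfolding regret_def by simp
qed

lemma etc_meas: "etc_price n V t \<in> borel_measurable \<Omega>"
proof (cases "t \<le> n")
  case True
  then have "etc_price n V t = (\<lambda>\<omega>. real t / real n)" by (auto simp: etc_price_def fun_eq_iff)
  then show ?thesis by simp
next
  case False
  then have "etc_price n V t = Pn n" by (auto simp: etc_eq fun_eq_iff)
  then show ?thesis by (simp add: Pn_meas)
qed

lemma regret_etc:
  assumes n: "n \<ge> 1" and T: "n \<le> T"
  shows "regret \<Omega> V (etc_price n V) T \<le> real n - 1/2 + Mb * (real T - real n) * (2 / (real n)^2 + 1 / real n)"
proof -
  define c where "c = gg mn - 2 * Mb * expectation (\<lambda>\<omega>. (Pn n \<omega> - mn)^2)"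
  have lb: "(if t \<le> n then 0 else c) \<le> expectation (\<lambda>\<omega>. GFT V t (etc_price n V t \<omega>) \<omega>)" if t: "t \<ge> 1" for t
  proof (cases "t \<le> n")
    case True
    have "2 * t - 1 \<ge> 1" "2 * t \<ge> 1" "2 * t - 1 \<noteq> 2 * t" using t by auto
    from exp_gft_const[OF this, of "real t / real n"] True gg_nonneg[of "real t / real n"]
    show ?thesis by (simp add: GFT_def etc_price_def)
  next
    case False
    have "2 * t - 1 \<noteq> 2 * t" "2 * t - 1 > 2 * n" "2 * t > 2 * n" using False t by auto
    from exploit[OF n this] False show ?thesis by (simp add: GFT_def etc_eq c_def)
  qed
  have "(\<Sum>t=1..T. (if t \<le> n then 0 else c)) \<le> expectation (\<lambda>\<omega>. \<Sum>t=1..T. GFT V t (etc_price n V t \<omega>) \<omega>)"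
  proof -
    have "(\<Sum>t=1..T. (if t \<le> n then 0 else c)) \<le> (\<Sum>t=1..T. expectation (\<lambda>\<omega>. GFT V t (etc_price n V t \<omega>) \<omega>))"
      by (intro sum_mono lb) auto
    also have "\<dots> = expectation (\<lambda>\<omega>. \<Sum>t=1..T. GFT V t (etc_price n V t \<omega>) \<omega>)"
      by (rule Bochner_Integration.integral_sum[symmetric]) (auto intro!: intG etc_meas)
    finally show ?thesis .
  qed
  moreover have "(\<Sum>t=1..T. (if t \<le> n then 0 else c)) = (real T - real n) * c"
  proof -
    have "(\<Sum>t=1..T. (if t \<le> n then 0 else c)) = (\<Sum>t\<in>{n<..T}. c)"
      by (rule sum.mono_neutral_cong_right) (use n in auto)
    then show ?thesis using T by simp
  qed
  ultimately have S2: "(real T - real n) * c \<le> expectation (\<lambda>\<omega>. \<Sum>t=1..T. GFT V t (etc_price n V t \<omega>) \<omega>)"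
    by simp
  have "regret \<Omega> V (etc_price n V) T \<le> real T * gg mn - (real T - real n) * c"
    using S1_le[of T] S2 unfolding regret_def by simp
  also have "\<dots> = real n * gg mn + (real T - real n) * (2 * Mb * expectation (\<lambda>\<omega>. (Pn n \<omega> - mn)^2))"
    by (simp add: c_def algebra_simps)
  also have "\<dots> \<le> real n * (1/2) + (real T - real n) * (2 * Mb * (1 / (real n)^2 + 1 / (2 * real n)))"
    using T Mpos by (intro add_mono mult_left_mono gg_m_half sq_Pn[OF n]) auto
  also have "\<dots> = real n / 2 + Mb * (real T - real n) * (2 / (real n)^2 + 1 / real n)"
    using n by (simp add: field_simps)
  also have "\<dots> \<le> real n - 1/2 + Mb * (real T - real n) * (2 / (real n)^2 + 1 / real n)"
    using n by simp
  finally show ?thesis .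
qed

end

theorem theorem4p2:
  fixes \<Omega> :: "'a measure" and V :: "nat \<Rightarrow> 'a \<Rightarrow> real"
    and \<nu> :: "real measure" and f :: "real \<Rightarrow> real" and M :: real
  assumes "prob_space \<Omega>"
    and "\<And>i. i \<ge> 1 \<Longrightarrow> V i \<in> borel_measurable \<Omega>"
    and "prob_space.indep_vars \<Omega> (\<lambda>_. borel) V {1..}"
    and "\<And>i. i \<ge> 1 \<Longrightarrow> distr \<Omega> borel (V i) = \<nu>"
    and "f \<in> borel_measurable borel"
    and "\<nu> = density lborel (\<lambda>x. ennreal (f x))"
    and "emeasure \<nu> {0..1} = 1"
    and "M > 0"
    and "\<And>x. 0 \<le> f x \<and> f x \<le> M"
  shows "(\<forall>T0 T::nat. 1 \<le> T0 \<longrightarrow> T0 \<le> T \<longrightarrow>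
            regret \<Omega> V (etc_price T0 V) T
              \<le> real T0 - 1/2 + M * (real T - real T0) * (2 / (real T0)^2 + 1 / real T0))
       \<and> (\<forall>T::nat. regret \<Omega> V (etc_price (nat \<lceil>sqrt (M * real T)\<rceil>) V) T
              \<le> 2.5 + 2 * sqrt (M * real T))"
proof -
  interpret E: etc \<Omega> V \<nu> f M by (rule etc.intro[OF assms])
  have P1: "\<forall>T0 T::nat. 1 \<le> T0 \<longrightarrow> T0 \<le> T \<longrightarrow>
            regret \<Omega> V (etc_price T0 V) T
              \<le> real T0 - 1/2 + M * (real T - real T0) * (2 / (real T0)^2 + 1 / real T0)"
    by (intro allI impI E.regret_etc)
  have P2: "regret \<Omega> V (etc_price (nat \<lceil>sqrt (M * real T)\<rceil>) V) T \<le> 2.5 + 2 * sqrt (M * real T)" for T :: nat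
  proof -
    define s where "s = sqrt (M * real T)"
    define n where "n = nat \<lceil>s\<rceil>"
    have s0: "0 \<le> s" unfolding s_def using assms(8) by simp
    have ss: "s * s = M * real T" unfolding s_def using assms(8) by simp
    have "regret \<Omega> V (etc_price n V) T \<le> 2.5 + 2 * s"
    proof (cases "T = 0")
      case True
      have "regret \<Omega> V (etc_price n V) T \<le> real T / 2" by (rule E.regret_triv)
      moreover have "real T = 0" using True by simp
      ultimately show ?thesis using s0 by linarith
    next
      case False
      then have sp: "s > 0" unfolding s_def using assms(8) by simp
      have xn: "s \<le> real n" "real n < s + 1" unfolding n_def using sp by linarith+
      have n1: "n \<ge> 1" using xn sp by linarith
      show ?thesis
      proof (cases "n \<le> T")
        case True
        define x where "x = real n"
        define A where "A = M * (real T - real n)"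
        have x0: "x > 0" using n1 by (simp add: x_def)
        have A0: "0 \<le> A" using True assms(8) by (simp add: A_def)
        have As: "A \<le> s * s" unfolding ss A_def using assms(8) by (simp add: mult_left_mono)
        have "s * s \<le> x * x" using xn s0 by (intro mult_mono) (auto simp: x_def)
        then have "A \<le> x * x" using As by linarith
        then have "A / (x * x) \<le> 1" using x0 by (subst divide_le_eq) auto
        moreover have "A * (2 / x^2) = 2 * (A / (x * x))" by (simp add: power2_eq_square)
        ultimately have t1: "A * (2 / x^2) \<le> 2" by linarith
        have "s * s \<le> s * x" using xn s0 by (intro mult_left_mono) (auto simp: x_def)
        then have "A \<le> s * x" using As by linarith
        then have "A / x \<le> s" using x0 by (subst divide_le_eq) auto
        then have t2: "A * (1 / x) \<le> s" by simp
        have "regret \<Omega> V (etc_price n V) T \<le> x - 1/2 + A * (2 / x^2 + 1 / x)"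
          using E.regret_etc[OF n1 True] by (simp add: x_def A_def)
        also have "\<dots> = x - 1/2 + A * (2 / x^2) + A * (1 / x)" by (simp add: algebra_simps)
        also have "\<dots> \<le> 2.5 + 2 * s"
        proof -
          have "x < s + 1" using xn by (simp add: x_def)
          then show ?thesis using t1 t2 by linarith
        qed
        finally show ?thesis .
      next
        case False
        then have "real T \<le> s + 1" using xn by linarith
        moreover have "regret \<Omega> V (etc_price n V) T \<le> real T / 2" by (rule E.regret_triv)
        ultimately show ?thesis using s0 by linarith
      qed
    qed
    then show ?thesis by (simp add: s_def n_def)
  qed
  show ?thesis using P1 P2 by blast
qed

end
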